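(* Let $\mu>0$, $c_0>0$, $c_1>0$, $c_2>0$. Then the equation \[ \ln\frac{1-B}{1+B} + \frac{2B}{1-B^2} = \frac{2\mu^2c_2}{c_1} \] has a unique solution $B\in(0,1)$, and, for this $B$, the equation \[ \Bigl(\frac{c_1}{2c_0} -1\Bigr) \ln\frac{1-A}{1+A} + \frac{2}{1+A} \Bigl(\frac{c_1}{2c_0} + \frac{A}{1-A} \Bigr) = \frac{c_1}{c_0(1-B^2)} \] has a unique solution $A\in(0,1)$. Moreover, if $c_1=2c_0$, then $A=B$. *)

theory Defs
  imports "HOL-Analysis.Analysis"
begin

end

theory Submission
  imports Defs "HOL-Real_Asymp.Real_Asymp"
begin

lemma sq_lt1: "0 \<le> x \<Longrightarrow> x < 1 \<Longrightarrow> 0 < 1 - (x::real)^2"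
proof -
  assume "0 \<le> x" "x < 1"
  then have "x*x < 1*1" by (intro mult_strict_mono) auto
  then show ?thesis by (simp add: power2_eq_square)
qed

definition FF :: "real \<Rightarrow> real" where
  "FF x = ln(1-x) - ln(1+x) + 2*x/(1-x^2)"
definition GG :: "real \<Rightarrow> real \<Rightarrow> real" where
  "GG k x = (k-1)*(ln(1-x) - ln(1+x)) + 2/(1+x)*(k + x/(1-x))"

lemma dln1: "x < 1 \<Longrightarrow> ((\<lambda>x. ln(1-x)) has_real_derivative (-1/(1-x))) (at x)"
  using DERIV_chain2[OF DERIV_ln[of "1-x"] DERIV_diff[OF DERIV_const[of 1] DERIV_ident]]
  by (simp add: divide_inverse)
lemma dln2: "-1 < x \<Longrightarrow> ((\<lambda>x. ln(1+x)) has_real_derivative (1/(1+x))) (at x)"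
  using DERIV_chain2[OF DERIV_ln[of "1+x"] DERIV_add[OF DERIV_const[of 1] DERIV_ident]]
  by (simp add: divide_inverse)
lemma alg1:
  fixes a b x :: real
  assumes "a \<noteq> 0" "b \<noteq> 0" "a = 1-x" "b = 1+x"
  shows "-1/a - 1/b + ((2*1)*(a*b) - (2*x)*(a*(0+1) + (0-1)*b)) / ((a*b)*(a*b)) = 4*x^2/(a*b)^2"
proof -
  have "-1/a - 1/b + ((2*1)*(a*b) - (2*x)*(a*(0+1) + (0-1)*b)) / ((a*b)*(a*b))
     = (-(a+b)*(a*b) + 2*(a*b) - 2*x*(a-b)) / ((a*b)^2)"
    using assms(1,2) by (simp add: field_simps power2_eq_square)
  also have "-(a+b)*(a*b) + 2*(a*b) - 2*x*(a-b) = 4*x^2"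
    unfolding assms(3,4) by (simp add: algebra_simps power2_eq_square)
  finally show ?thesis .
qed

lemma dF: assumes "-1<x" "x<1"
  shows "(FF has_real_derivative 4*x^2/(1-x^2)^2) (at x)"
proof -
  have h1: "1-x \<noteq> 0" "1+x \<noteq> 0" using assms by auto
  have e: "\<And>y::real. (1 - y^2) = (1-y)*(1+y)" by (simp add: algebra_simps power2_eq_square)
  have FF': "FF = (\<lambda>x. ln(1-x) - ln(1+x) + 2*x/((1-x)*(1+x)))"
    by (rule ext) (simp add: FF_def e)
  have dp: "((\<lambda>x. (1-x)*(1+x)) has_real_derivative ((1-x)*(0+1) + (0-1)*(1+x))) (at x)"
    by (intro DERIV_mult' DERIV_diff DERIV_add DERIV_const DERIV_ident)
  have d2x: "((\<lambda>x. 2*x) has_real_derivative 2*1) (at x)"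
    by (intro DERIV_cmult DERIV_ident)
  have d3: "((\<lambda>x. 2*x/((1-x)*(1+x))) has_real_derivative
      ((2*1)*((1-x)*(1+x)) - (2*x)*((1-x)*(0+1) + (0-1)*(1+x))) / (((1-x)*(1+x))*((1-x)*(1+x)))) (at x)"
    by (rule DERIV_divide[OF d2x dp]) (use h1 in simp)
  have D: "(FF has_real_derivative (-1/(1-x) - 1/(1+x) + ((2*1)*((1-x)*(1+x)) - (2*x)*((1-x)*(0+1) + (0-1)*(1+x))) / (((1-x)*(1+x))*((1-x)*(1+x))))) (at x)"
    unfolding FF' by (intro DERIV_add DERIV_diff dln1 dln2 d3 assms)
  have "-1/(1-x) - 1/(1+x) + ((2*1)*((1-x)*(1+x)) - (2*x)*((1-x)*(0+1) + (0-1)*(1+x))) / (((1-x)*(1+x))*((1-x)*(1+x))) = 4*x^2/((1-x)*(1+x))^2"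
    using alg1[OF h1 refl refl] .
  then have "-1/(1-x) - 1/(1+x) + ((2*1)*((1-x)*(1+x)) - (2*x)*((1-x)*(0+1) + (0-1)*(1+x))) / (((1-x)*(1+x))*((1-x)*(1+x))) = 4*x^2/(1-x^2)^2"
    by (simp only: e)
  with D show ?thesis by simp
qed
lemma alg2:
  fixes a b x k :: real
  assumes "a \<noteq> 0" "b \<noteq> 0" "a = 1-x" "b = 1+x"
  shows "(k-1)*(-1/a - 1/b) + (2/b*(0 + (1*a - x*(0-1))/(a*a)) + ((0*b - 2*(0+1))/(b*b))*(k + x/a))
     = 4*(1/a - k)/(a*b^2)"
proof -
  have "(k-1)*(-1/a - 1/b) + (2/b*(0 + (1*a - x*(0-1))/(a*a)) + ((0*b - 2*(0+1))/(b*b))*(k + x/a))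
     = (-(k-1)*(a+b)*a*b + 2*b*(a+x) - 2*a*(k*a+x)) / (a^2*b^2)"
    using assms(1,2) by (simp add: field_simps power2_eq_square)
  also have "-(k-1)*(a+b)*a*b + 2*b*(a+x) - 2*a*(k*a+x) = 4 - 4*k*a"
    unfolding assms(3,4) by (simp add: algebra_simps power2_eq_square)
  also have "(4 - 4*k*a) / (a^2*b^2) = 4*(1/a - k)/(a*b^2)"
    using assms(1,2) by (simp add: field_simps power2_eq_square)
  finally show ?thesis .
qed

lemma dG: assumes "-1<x" "x<1"
  shows "(GG k has_real_derivative 4*(1/(1-x) - k)/((1-x)*(1+x)^2)) (at x)"
proof -
  have h1: "1-x \<noteq> 0" "1+x \<noteq> 0" using assms by auto
  have dl: "((\<lambda>x. (k-1)*(ln(1-x) - ln(1+x))) has_real_derivative (k-1)*(-1/(1-x) - 1/(1+x))) (at x)"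
    by (intro DERIV_cmult DERIV_diff dln1 dln2 assms)
  have q1: "((\<lambda>x. 2/(1+x)) has_real_derivative (0*(1+x) - 2*(0+1))/((1+x)*(1+x))) (at x)"
    by (rule DERIV_divide[OF DERIV_const DERIV_add[OF DERIV_const DERIV_ident]]) (use h1 in simp)
  have q2: "((\<lambda>x. x/(1-x)) has_real_derivative (1*(1-x) - x*(0-1))/((1-x)*(1-x))) (at x)"
    by (rule DERIV_divide[OF DERIV_ident DERIV_diff[OF DERIV_const DERIV_ident]]) (use h1 in simp)
  have q3: "((\<lambda>x. k + x/(1-x)) has_real_derivative 0 + (1*(1-x) - x*(0-1))/((1-x)*(1-x))) (at x)"
    by (rule DERIV_add[OF DERIV_const q2])
  have D: "(GG k has_real_derivative (k-1)*(-1/(1-x) - 1/(1+x)) + (2/(1+x)*(0 + (1*(1-x) - x*(0-1))/((1-x)*(1-x))) + ((0*(1+x) - 2*(0+1))/((1+x)*(1+x)))*(k + x/(1-x)))) (at x)"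
    unfolding GG_def[abs_def] by (intro DERIV_add dl DERIV_mult' q1 q3)
  with alg2[OF h1 refl refl, of k] show ?thesis by simp
qed

lemma limF: "filterlim FF at_top (at_left 1)"
  unfolding FF_def[abs_def] by real_asymp
lemma limG: "k > 0 \<Longrightarrow> filterlim (GG k) at_top (at_left 1)"
  unfolding GG_def[abs_def] by real_asymp

lemma exist_sol:
  fixes f :: "real \<Rightarrow> real"
  assumes lim: "filterlim f at_top (at_left 1)"
    and cont: "\<And>x. -1<x \<Longrightarrow> x<1 \<Longrightarrow> isCont f x"
    and f0: "f 0 < M"
  shows "\<exists>x. 0 < x \<and> x < 1 \<and> f x = M"
proof -
  have "\<forall>\<^sub>F x in at_left 1. M \<le> f x \<and> x \<in> {0<..<1}"
    using lim eventually_at_left_real[of 0 1] by (auto simp: filterlim_at_top intro: eventually_conj)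
  then have "\<exists>b. M \<le> f b \<and> b \<in> {0<..<1}"
    by (rule eventually_happens'[rotated]) simp
  then obtain b where b: "M \<le> f b" "0 < b" "b < 1" by auto
  have "continuous_on {0..b} f"
    using b by (intro continuous_at_imp_continuous_on) (auto intro!: cont)
  then obtain x where x: "0 \<le> x" "x \<le> b" "f x = M"
    using IVT'[of f 0 M b] f0 b by auto
  then show ?thesis using f0 b by (metis less_eq_real_def order.strict_trans1 order_less_irrefl)
qed

theorem lemma1:
  fixes mu c0 c1 c2 :: real
  assumes "mu > 0" and "c0 > 0" and "c1 > 0" and "c2 > 0"
  shows "(\<exists>!B. B \<in> {0<..<1} \<and>
            ln ((1 - B) / (1 + B)) + 2 * B / (1 - B^2) = 2 * mu^2 * c2 / c1)
    \<and> (\<forall>B. B \<in> {0<..<1} \<and>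
            ln ((1 - B) / (1 + B)) + 2 * B / (1 - B^2) = 2 * mu^2 * c2 / c1 \<longrightarrow>
          (\<exists>!A. A \<in> {0<..<1} \<and>
             (c1 / (2 * c0) - 1) * ln ((1 - A) / (1 + A))
               + 2 / (1 + A) * (c1 / (2 * c0) + A / (1 - A)) = c1 / (c0 * (1 - B^2)))
          \<and> (c1 = 2 * c0 \<longrightarrow>
              (\<forall>A. A \<in> {0<..<1} \<and>
                 (c1 / (2 * c0) - 1) * ln ((1 - A) / (1 + A))
                   + 2 / (1 + A) * (c1 / (2 * c0) + A / (1 - A)) = c1 / (c0 * (1 - B^2))
                 \<longrightarrow> A = B)))"
proof -
  have lnd: "ln ((1 - x) / (1 + x)) = ln(1-x) - ln(1+x)" if "0<x" "x<1" for x :: real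
    using that by (simp add: ln_div)
  define M where "M = 2 * mu^2 * c2 / c1"
  have M: "M > 0" using assms unfolding M_def by simp
  have eqF: "(x \<in> {0<..<1} \<and> ln ((1 - x) / (1 + x)) + 2 * x / (1 - x^2) = M) \<longleftrightarrow> (0<x \<and> x<1 \<and> FF x = M)" for x
    by (auto simp: lnd FF_def)
  have Fmono: "FF a < FF b" if "0<a" "a<b" "b<1" for a b
  proof (rule DERIV_pos_imp_increasing[OF \<open>a<b\<close>])
    fix x assume x: "a \<le> x" "x \<le> b"
    then have "0<x" "x<1" using that by auto
    then have "0 < 4*x^2/(1-x^2)^2" using sq_lt1[of x] by simp
    moreover have "DERIV FF x :> 4*x^2/(1-x^2)^2" using \<open>0<x\<close> \<open>x<1\<close> by (intro dF) auto
    ultimately show "\<exists>y. DERIV FF x :> y \<and> 0 < y" by blast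
  qed
  have ex1B: "\<exists>!B. 0<B \<and> B<1 \<and> FF B = M"
  proof -
    have contF: "isCont FF x" if "-1<x" "x<1" for x using dF[OF that] by (rule DERIV_isCont)
    have F0: "FF 0 < M" using M by (simp add: FF_def)
    obtain B where B: "0<B" "B<1" "FF B = M"
      using exist_sol[OF limF contF F0] by blast
    have uniq: "B' = B" if "0<B'" "B'<1" "FF B' = M" for B'
    proof -
      have "\<not> B' < B" using Fmono[of B' B] that \<open>B<1\<close> \<open>FF B = M\<close> by auto
      moreover have "\<not> B < B'" using Fmono[of B B'] that \<open>0<B\<close> \<open>FF B = M\<close> by auto
      ultimately show ?thesis by linarith
    qed
    show ?thesis
    proof (rule ex1I[of _ B])
      show "0<B \<and> B<1 \<and> FF B = M" using B by simp
    next
      fix B' assume "0<B' \<and> B'<1 \<and> FF B' = M"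
      then show "B' = B" using uniq by blast
    qed
  qed
  define k where "k = c1 / (2*c0)"
  have k: "k > 0" using assms unfolding k_def by simp
  have part2: "(\<exists>!A. 0<A \<and> A<1 \<and> GG k A = 2*k/(1-B^2)) \<and> (k = 1 \<longrightarrow> (\<forall>A. 0<A \<and> A<1 \<and> GG k A = 2*k/(1-B^2) \<longrightarrow> A = B))"
    if B: "0<B" "B<1" for B
  proof -
    define R where "R = 2*k/(1-B^2)"
    have B2: "0 < 1-B^2" "1-B^2 < 1" using B sq_lt1[of B] by auto
    have G0: "GG k 0 = 2*k" by (simp add: GG_def)
    have R: "R > 2*k" unfolding R_def using B2 k by (simp add: field_simps)
    define s where "s = max 0 (1 - 1/k)"
    have s: "0 \<le> s" "s < 1" using k unfolding s_def by auto
    have Gle: "GG k x \<le> GG k 0" if "0 \<le> x" "x \<le> s" for x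
    proof (cases "x = 0")
      case False
      show ?thesis
      proof (rule DERIV_nonpos_imp_nonincreasing[of 0 x "GG k"])
        fix y assume y: "0 \<le> y" "y \<le> x"
        have "y < 1" using y that s by auto
        have "y \<le> 1 - 1/k" using y that False unfolding s_def by auto
        then have "1/(1-y) \<le> k" using k \<open>y<1\<close> by (simp add: field_simps)
        have "DERIV (GG k) y :> 4*(1/(1-y) - k)/((1-y)*(1+y)^2)" using y \<open>y<1\<close> by (intro dG) auto
        moreover have "4*(1/(1-y) - k)/((1-y)*(1+y)^2) \<le> 0"
          using y \<open>y<1\<close> \<open>1/(1-y) \<le> k\<close> by (auto intro!: divide_nonpos_pos mult_pos_pos)
        ultimately show "\<exists>d. DERIV (GG k) y :> d \<and> d \<le> 0" by blast
      qed (use that in auto)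
    qed simp
    have Gmono: "GG k a < GG k b" if "s<a" "a<b" "b<1" for a b
    proof (rule DERIV_pos_imp_increasing[OF \<open>a<b\<close>])
      fix y assume y: "a \<le> y" "y \<le> b"
      have "y > 1 - 1/k" "y > 0" "y < 1" using y that unfolding s_def by auto
      then have "1/(1-y) > k" using k by (simp add: field_simps)
      have "DERIV (GG k) y :> 4*(1/(1-y) - k)/((1-y)*(1+y)^2)" using \<open>y<1\<close> \<open>y>0\<close> by (intro dG) auto
      moreover have "4*(1/(1-y) - k)/((1-y)*(1+y)^2) > 0"
        using \<open>y<1\<close> \<open>y>0\<close> \<open>1/(1-y) > k\<close> by (auto intro!: divide_pos_pos mult_pos_pos)
      ultimately show "\<exists>d. DERIV (GG k) y :> d \<and> d > 0" by blast
    qed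
    have gt_s: "s < A" if "0<A" "A<1" "GG k A = R" for A
      using Gle[of A] that G0 R by force
    have contG: "isCont (GG k) x" if "-1<x" "x<1" for x using dG[OF that] by (rule DERIV_isCont)
    have G0R: "GG k 0 < R" using G0 R by simp
    obtain A where A: "0<A" "A<1" "GG k A = R"
      using exist_sol[OF limG[OF k] contG G0R] by blast
    have uniq: "A' = A" if "0<A'" "A'<1" "GG k A' = R" for A'
    proof -
      have "\<not> A' < A" using Gmono[of A' A] that A gt_s[OF that] by auto
      moreover have "\<not> A < A'" using Gmono[of A A'] that A gt_s[OF A] by auto
      ultimately show ?thesis by linarith
    qed
    have k1: "A = B" if "k = 1" "0<A" "A<1" "GG k A = R" for A
    proof -
      have "GG 1 A = 2/(1-A^2)" using \<open>0<A\<close> \<open>A<1\<close>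
        by (simp add: GG_def field_simps power2_eq_square)
      then have "GG k A = 2/(1-A^2)" using \<open>k=1\<close> by simp
      then have "2/(1-A^2) = 2/(1-B^2)" using that R_def by simp
      then show ?thesis using that B sq_lt1[of A] sq_lt1[of B] by (simp add: field_simps power2_eq_iff_nonneg)
    qed
    have e1: "\<exists>!A. 0<A \<and> A<1 \<and> GG k A = R"
    proof (rule ex1I[of _ A])
      show "0<A \<and> A<1 \<and> GG k A = R" using A by simp
    next
      fix A' assume "0<A' \<and> A'<1 \<and> GG k A' = R"
      then show "A' = A" using uniq by blast
    qed
    have e2: "k = 1 \<longrightarrow> (\<forall>A. 0<A \<and> A<1 \<and> GG k A = R \<longrightarrow> A = B)"
      using k1 by blast
    show ?thesis unfolding R_def[symmetric] using e1 e2 by (rule conjI)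
  qed
  have eqG: "(x \<in> {0<..<1} \<and> (c1 / (2 * c0) - 1) * ln ((1 - x) / (1 + x))
               + 2 / (1 + x) * (c1 / (2 * c0) + x / (1 - x)) = c1 / (c0 * (1 - B^2)))
     \<longleftrightarrow> (0<x \<and> x<1 \<and> GG k x = 2*k/(1-B^2))" for x B
  proof -
    have e: "c1 / (c0 * (1 - B^2)) = 2*k/(1-B^2)" unfolding k_def using assms by (simp add: divide_divide_eq_left)
    have kk: "c1 / (2 * c0) = k" by (simp add: k_def)
    show ?thesis unfolding e kk GG_def by (auto simp: lnd)
  qed
  have ck: "c1 = 2 * c0 \<longleftrightarrow> k = 1" unfolding k_def using assms by (auto simp: field_simps)
  show ?thesis
    unfolding M_def[symmetric] eqF eqG ck
    apply (rule conjI[OF ex1B])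
    apply (intro allI impI)
    apply (rule part2)
     apply auto
    done
qed

end
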